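(* Let $v_n\rightharpoonup0$ weakly in $W^{1,2}(\Omega;\mathbb{R}^m)$ and let $\alpha_n>0$ with $\alpha_nv_n$ bounded in $W^{1,\infty}$. Let $(\tilde\pi,\tilde\mu_x,\tilde\lambda_x)$ be representation measures for $(\alpha_n,v_n)$ along a subsequence (not relabeled), and let $R=\sup_n\|\alpha_n\nabla v_n\|_\infty$. Let $x_0\in\Omega\cup\overline{\partial\Omega_1}$ and $r>0$, and let $\theta^r_k\in C^\infty_c(B(x_0,r))$ be uniformly bounded with $\theta^r_k\to\chi_{B_\Omega(x_0,r)}$ pointwise on $\overline\Omega$. Then $$\lim_{k\to\infty}\lim_{n\to\infty}\int_{B_\Omega(x_0,r)}\mathcal F\big(x_0,\alpha_n,\theta^r_k(x)\nabla v_n(x)\big)\,dx=\int_{B_\Omega(x_0,r)}\tilde{\mathcal I}(x_0,x)\,d\tilde\pi(x),$$ where $$\tilde{\mathcal I}(x_0,x)=\int_{\overline{\mathcal B(0,R)}}U(x_0,F)\,d\tilde\mu_x(F)+\tfrac12\int_{\mathcal S}(\mathsf L(x_0)F,F)\,d\tilde\lambda_x(F).$$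
   Context: $\Omega\subset\mathbb{R}^d$ is a bounded domain with $C^1$ boundary, and $\partial\Omega_1\subset\partial\Omega$ is relatively open. $B_\Omega(x_0,r)=B(x_0,r)\cap\overline\Omega$. $(A,B)=\mathrm{tr}(AB^T)$ and $|\cdot|$ is the Frobenius norm. $U$ is continuous on $\overline\Omega\times\mathbb{R}^{m\times d}$ with $U(x,0)=0$, and $\mathsf L$ is a continuous fourth-order tensor field on $\overline\Omega$. Notation: - $\mathcal F(x,\alpha,G)=U(x,\alpha G)|G|^2+\tfrac12(\mathsf L(x)G,G)$; - $\mathcal I(x,\mu,\lambda)=\int U(x,F)\,d\mu(F)+\tfrac12\int_{\mathcal S}(\mathsf L(x)F,F)\,d\lambda(F)$, with $\mathcal S$ the unit sphere of $\mathbb{R}^{m\times d}$. Representation measures: $\tilde\pi$ is a nonnegative Radon measure on $\overline\Omega$, $\tilde\mu_x$ is a probability measure on $\overline{\mathcal B(0,R)}$ and $\tilde\lambda_x$ is a probability measure on $\mathcal S$, such that along the subsequence $\mathcal F(x,\alpha_n,\nabla v_n)\,dx\overset{*}{\rightharpoonup}\mathcal I(x,\tilde\mu_x,\tilde\lambda_x)\,d\tilde\pi$ as measures on $\overline\Omega$, for every continuous $U$ vanishing at $G=0$ and every continuous $\mathsf L$. *)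

theory Defs
  imports "HOL-Analysis.Analysis" "HOL-Probability.Probability"
begin

text \<open>Points of R^d are of type real^'d, matrices of R^(m x d) are of type real^'d^'m
  (row i is the gradient of the i-th component).  On this type norm is the Frobenius
  norm and inner is the Frobenius inner product (A,B) = tr(A B^T).\<close>

definition C1_fun :: "('a::euclidean_space \<Rightarrow> real) \<Rightarrow> bool" where
  "C1_fun g \<longleftrightarrow> (\<exists>D. (\<forall>x. (g has_derivative blinfun_apply (D x)) (at x)) \<and> continuous_on UNIV D)"

text \<open>Locally near every boundary point, after a rotation (direction e), the domain is the
  region above the graph of a C^1 function on the hyperplane orthogonal to e.\<close>
definition C1_boundary :: "'a::euclidean_space set \<Rightarrow> bool" where
  "C1_boundary \<Omega> \<longleftrightarrow> (\<forall>p\<in>frontier \<Omega>. \<exists>r>0. \<exists>e g. norm e = 1 \<and> C1_fun g \<and>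
      \<Omega> \<inter> ball p r = {x\<in>ball p r. x \<bullet> e > g (x - (x \<bullet> e) *\<^sub>R e)})"

fun pdiff :: "'d list \<Rightarrow> (real^'d \<Rightarrow> real) \<Rightarrow> real^'d \<Rightarrow> real" where
  "pdiff [] f = f"
| "pdiff (j # js) f = pdiff js (\<lambda>x. frechet_derivative f (at x) (axis j 1))"

definition smooth :: "(real^'d \<Rightarrow> real) \<Rightarrow> bool" where
  "smooth f \<longleftrightarrow> (\<forall>js x. pdiff js f differentiable (at x))"

definition tsupport :: "('a::topological_space \<Rightarrow> real) \<Rightarrow> 'a set" where
  "tsupport f = closure {x. f x \<noteq> 0}"

definition Cc_inf :: "(real^'d) set \<Rightarrow> (real^'d \<Rightarrow> real) set" where
  "Cc_inf A = {f. smooth f \<and> compact (tsupport f) \<and> tsupport f \<subseteq> A}"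

definition L2 :: "(real^'d) set \<Rightarrow> (real^'d \<Rightarrow> 'b::euclidean_space) \<Rightarrow> bool" where
  "L2 \<Omega> f \<longleftrightarrow> f \<in> borel_measurable (lebesgue_on \<Omega>) \<and>
      set_integrable lebesgue \<Omega> (\<lambda>x. (norm (f x))\<^sup>2)"

text \<open>Dv is the weak gradient of v on \<Omega>: (Dv x) $ i $ j = d_j v_i (x).\<close>
definition weak_gradient :: "(real^'d) set \<Rightarrow> (real^'d \<Rightarrow> real^'m) \<Rightarrow> (real^'d \<Rightarrow> real^'d^'m) \<Rightarrow> bool" where
  "weak_gradient \<Omega> v Dv \<longleftrightarrow>
     (\<forall>\<phi>\<in>Cc_inf \<Omega>. \<forall>i j.
        set_integrable lebesgue \<Omega> (\<lambda>x. v x $ i * frechet_derivative \<phi> (at x) (axis j 1)) \<and>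
        set_integrable lebesgue \<Omega> (\<lambda>x. Dv x $ i $ j * \<phi> x) \<and>
        (LINT x:\<Omega>|lebesgue. v x $ i * frechet_derivative \<phi> (at x) (axis j 1))
          = - (LINT x:\<Omega>|lebesgue. Dv x $ i $ j * \<phi> x))"

definition W12 :: "(real^'d) set \<Rightarrow> (real^'d \<Rightarrow> real^'m) \<Rightarrow> (real^'d \<Rightarrow> real^'d^'m) \<Rightarrow> bool" where
  "W12 \<Omega> v Dv \<longleftrightarrow> L2 \<Omega> v \<and> L2 \<Omega> Dv \<and> weak_gradient \<Omega> v Dv"

text \<open>Weak convergence to 0 in the Hilbert space W^{1,2}(\<Omega>;R^m) (by the Riesz
  representation, testing against the W^{1,2} inner product of all elements).\<close>
definition W12_weak_to_zero :: "(real^'d) set \<Rightarrow> (nat \<Rightarrow> real^'d \<Rightarrow> real^'m) \<Rightarrow> (nat \<Rightarrow> real^'d \<Rightarrow> real^'d^'m) \<Rightarrow> bool" where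
  "W12_weak_to_zero \<Omega> v Dv \<longleftrightarrow> (\<forall>n. W12 \<Omega> (v n) (Dv n)) \<and>
     (\<forall>w Dw. W12 \<Omega> w Dw \<longrightarrow>
        (\<lambda>n. (LINT x:\<Omega>|lebesgue. v n x \<bullet> w x + Dv n x \<bullet> Dw x)) \<longlonglongrightarrow> 0)"

definition Fdens :: "(real^'d \<Rightarrow> real^'d^'m \<Rightarrow> real) \<Rightarrow> (real^'d \<Rightarrow> ((real^'d^'m) \<Rightarrow>\<^sub>L (real^'d^'m)))
     \<Rightarrow> real^'d \<Rightarrow> real \<Rightarrow> real^'d^'m \<Rightarrow> real" where
  "Fdens U L x \<alpha> G = U x (\<alpha> *\<^sub>R G) * (norm G)\<^sup>2 + 1/2 * (L x G \<bullet> G)"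

definition Iint :: "(real^'d \<Rightarrow> real^'d^'m \<Rightarrow> real) \<Rightarrow> (real^'d \<Rightarrow> ((real^'d^'m) \<Rightarrow>\<^sub>L (real^'d^'m)))
     \<Rightarrow> real^'d \<Rightarrow> (real^'d^'m) measure \<Rightarrow> (real^'d^'m) measure \<Rightarrow> real" where
  "Iint U L x \<mu> \<nu> = (\<integral>F. U x F \<partial>\<mu>) + 1/2 * (LINT F:sphere 0 1|\<nu>. L x F \<bullet> F)"

definition repr_measures ::
  "(real^'d) set \<Rightarrow> (nat \<Rightarrow> real) \<Rightarrow> (nat \<Rightarrow> real^'d \<Rightarrow> real^'d^'m) \<Rightarrow> real
   \<Rightarrow> (real^'d) measure \<Rightarrow> (real^'d \<Rightarrow> (real^'d^'m) measure) \<Rightarrow> (real^'d \<Rightarrow> (real^'d^'m) measure) \<Rightarrow> bool" where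
  "repr_measures \<Omega> \<alpha> Dv R \<pi> \<mu> \<nu> \<longleftrightarrow>
     sets \<pi> = sets borel \<and> finite_measure \<pi> \<and> emeasure \<pi> (- closure \<Omega>) = 0 \<and>
     (\<forall>x\<in>closure \<Omega>.
        prob_space (\<mu> x) \<and> sets (\<mu> x) = sets borel \<and> emeasure (\<mu> x) (- cball 0 R) = 0 \<and>
        prob_space (\<nu> x) \<and> sets (\<nu> x) = sets borel \<and> emeasure (\<nu> x) (- sphere 0 1) = 0) \<and>
     (\<forall>U L. continuous_on (closure \<Omega> \<times> UNIV) (\<lambda>(x, G). U x G) \<and> (\<forall>x\<in>closure \<Omega>. U x 0 = 0) \<and>
            continuous_on (closure \<Omega>) L \<longrightarrow>
        integrable \<pi> (\<lambda>x. Iint U L x (\<mu> x) (\<nu> x)) \<and>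
        (\<forall>\<phi>. continuous_on (closure \<Omega>) \<phi> \<longrightarrow>
           (\<lambda>n. (LINT x:\<Omega>|lebesgue. \<phi> x * Fdens U L x (\<alpha> n) (Dv n x)))
             \<longlonglongrightarrow> (\<integral>x. \<phi> x * Iint U L x (\<mu> x) (\<nu> x) \<partial>\<pi>)))"

end

theory Submission imports Defs begin

lemma integral_AE_lebesgue:
  fixes f g :: "'a::euclidean_space \<Rightarrow> real"
  assumes "AE x in lebesgue. f x = g x"
  shows "integral\<^sup>L lebesgue f = integral\<^sup>L lebesgue g"
proof (cases "f \<in> borel_measurable lebesgue")
  case True
  then have "g \<in> borel_measurable lebesgue" using borel_measurable_AE assms by blast
  then show ?thesis using True assms integral_cong_AE by blast
next
  case False
  have ae: "AE x in lebesgue. g x = f x" using assms by auto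
  have "g \<notin> borel_measurable lebesgue" using borel_measurable_AE[OF _ ae] False by blast
  then have "\<not> integrable lebesgue g" using borel_measurable_integrable by blast
  moreover have "\<not> integrable lebesgue f" using False borel_measurable_integrable by blast
  ultimately show ?thesis using not_integrable_integral_eq by metis
qed

lemma frontier_negligible:
  fixes \<Omega> :: "'a::euclidean_space set"
  assumes "open \<Omega>" "C1_boundary \<Omega>"
  shows "negligible (frontier \<Omega>)"
proof (rule locally_negligible_alt[THEN iffD2], intro ballI)
  fix p assume p: "p \<in> frontier \<Omega>"
  then obtain r e g where r: "r > 0" and e: "norm e = 1" and g: "C1_fun g"
    and eq: "\<Omega> \<inter> ball p r = {x\<in>ball p r. x \<bullet> e > g (x - (x \<bullet> e) *\<^sub>R e)}"
    using assms(2) unfolding C1_boundary_def by blast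
  have gd: "\<And>x. g differentiable (at x)" using g unfolding C1_fun_def differentiable_def by blast
  have gc: "continuous_on UNIV g"
    using gd by (simp add: continuous_at_imp_continuous_on differentiable_imp_continuous_within)
  define \<psi> where "\<psi> z = z \<bullet> e - g (z - (z \<bullet> e) *\<^sub>R e)" for z
  have \<psi>c: "continuous_on UNIV \<psi>" unfolding \<psi>_def
    by (intro continuous_intros continuous_on_compose2[OF gc]) auto
  have ee: "e \<bullet> e = 1" using e by (simp add: dot_square_norm)
  have sub: "frontier \<Omega> \<inter> ball p r \<subseteq> (\<lambda>y. y + g y *\<^sub>R e) ` {y. e \<bullet> y = 0}"
  proof
    fix x assume x: "x \<in> frontier \<Omega> \<inter> ball p r"
    have xf: "x \<in> frontier \<Omega>" and xb: "x \<in> ball p r" using x by auto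
    have xn: "x \<notin> \<Omega>" using xf assms(1) frontier_def interior_open by (metis DiffD2)
    have xc: "x \<in> closure \<Omega>" using xf frontier_def by (metis DiffD1)
    have "x \<notin> {x\<in>ball p r. x \<bullet> e > g (x - (x \<bullet> e) *\<^sub>R e)}" using xn eq by (metis IntD1)
    then have le: "\<psi> x \<le> 0" using xb unfolding \<psi>_def by simp
    have "\<not> \<psi> x < 0"
    proof
      assume lt: "\<psi> x < 0"
      have op: "open ({z. \<psi> z < 0} \<inter> ball p r)"
        using \<psi>c by (intro open_Int open_Collect_less continuous_on_const open_ball)
      have "x \<in> {z. \<psi> z < 0} \<inter> ball p r" using lt xb by simp
      then obtain z where z1: "z \<in> \<Omega>" and z2: "z \<in> {z. \<psi> z < 0} \<inter> ball p r"
        using op xc open_Int_closure_eq_empty by (metis disjoint_iff IntI)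
      then have "z \<in> \<Omega> \<inter> ball p r" by blast
      then have "z \<in> {x\<in>ball p r. x \<bullet> e > g (x - (x \<bullet> e) *\<^sub>R e)}" using eq by (metis)
      then have "\<psi> z > 0" unfolding \<psi>_def by simp
      then show False using z2 by simp
    qed
    then have "\<psi> x = 0" using le by auto
    define y where "y = x - (x \<bullet> e) *\<^sub>R e"
    have "e \<bullet> y = 0" unfolding y_def using ee by (simp add: inner_diff_right inner_commute)
    moreover have "x = y + g y *\<^sub>R e" using \<open>\<psi> x = 0\<close> unfolding y_def \<psi>_def by simp
    ultimately show "x \<in> (\<lambda>y. y + g y *\<^sub>R e) ` {y. e \<bullet> y = 0}" by blast
  qed
  have "negligible ((\<lambda>y. y + g y *\<^sub>R e) ` {y. e \<bullet> y = 0})"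
  proof (rule negligible_differentiable_image_negligible)
    show "negligible {y. e \<bullet> y = 0}" using e by (intro negligible_hyperplane) auto
    show "(\<lambda>y. y + g y *\<^sub>R e) differentiable_on {y. e \<bullet> y = 0}"
      using gd by (intro differentiable_at_imp_differentiable_on differentiable_add differentiable_ident differentiable_scaleR differentiable_const)
  qed simp
  then have "negligible (frontier \<Omega> \<inter> ball p r)" using sub negligible_subset by blast
  moreover have "openin (top_of_set (frontier \<Omega>)) (frontier \<Omega> \<inter> ball p r)"
    by (simp add: openin_open_Int)
  ultimately show "\<exists>U. openin (top_of_set (frontier \<Omega>)) U \<and> p \<in> U \<and> negligible U"
    using p r by force
qed



lemma Fdens_scale:
  "Fdens (\<lambda>x G. (t x)\<^sup>2 * U x0 (t x *\<^sub>R G)) (\<lambda>x. (t x)\<^sup>2 *\<^sub>R L x0) x a G = Fdens U L x0 a (t x *\<^sub>R G)"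
  unfolding Fdens_def
  by (simp add: blinfun.scaleR_right scaleR_blinfun.rep_eq power_mult_distrib algebra_simps power2_eq_square)

lemma Fdens_zero: "Fdens U L x0 a 0 = 0"
  unfolding Fdens_def by simp

lemma prob_abs_bound:
  fixes f :: "'a \<Rightarrow> real"
  assumes "prob_space N" "AE x in N. \<bar>f x\<bar> \<le> B" "0 \<le> B"
  shows "\<bar>integral\<^sup>L N f\<bar> \<le> B"
proof -
  interpret prob_space N by fact
  have "\<bar>integral\<^sup>L N f\<bar> \<le> (\<integral>x. \<bar>f x\<bar> \<partial>N)" by (rule integral_abs_bound)
  also have "\<dots> \<le> (\<integral>x. B \<partial>N)"
    by (rule integral_mono_AE') (use assms in auto)
  also have "\<dots> = B" by (simp add: prob_space)
  finally show ?thesis .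
qed

lemma dconv_lemma:
  fixes h :: "'b::euclidean_space \<Rightarrow> real"
  assumes ps: "prob_space N" and sN: "sets N = sets borel"
    and ae: "\<And>k. AE F in N. norm (t k *\<^sub>R F) \<le> K"
    and aec: "AE F in N. norm (c *\<^sub>R F) \<le> K"
    and hc: "continuous_on UNIV h"
    and hB: "\<forall>G\<in>cball 0 K. \<bar>h G\<bar> \<le> B"
    and tl: "t \<longlonglongrightarrow> c"
  shows "(\<lambda>k. \<integral>F. h (t k *\<^sub>R F) \<partial>N) \<longlonglongrightarrow> (\<integral>F. h (c *\<^sub>R F) \<partial>N)"
proof (rule integral_dominated_convergence[where w="\<lambda>_. B"])
  interpret prob_space N by fact
  have meas: "(\<lambda>F. h (s *\<^sub>R F)) \<in> borel_measurable N" for s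
  proof -
    have "continuous_on UNIV (\<lambda>F. h (s *\<^sub>R F))"
      by (intro continuous_on_compose2[OF hc] continuous_intros) auto
    then have "(\<lambda>F. h (s *\<^sub>R F)) \<in> borel_measurable borel" by (rule borel_measurable_continuous_onI)
    moreover have "borel_measurable N = (borel_measurable borel :: ('b \<Rightarrow> real) set)"
      by (rule measurable_cong_sets[OF sN refl])
    ultimately show ?thesis by simp
  qed
  show "(\<lambda>F. h (c *\<^sub>R F)) \<in> borel_measurable N" by (rule meas)
  show "\<And>i. (\<lambda>F. h (t i *\<^sub>R F)) \<in> borel_measurable N" by (rule meas)
  show "integrable N (\<lambda>_. B)" by simp
  show "AE F in N. (\<lambda>i. h (t i *\<^sub>R F)) \<longlonglongrightarrow> h (c *\<^sub>R F)"
  proof (intro AE_I2)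
    fix F
    have "isCont h (c *\<^sub>R F)" using hc by (simp add: continuous_on_eq_continuous_at)
    then show "(\<lambda>i. h (t i *\<^sub>R F)) \<longlonglongrightarrow> h (c *\<^sub>R F)"
      by (rule isCont_tendsto_compose) (intro tendsto_intros tl)
  qed
  show "AE F in N. norm (h (t i *\<^sub>R F)) \<le> B" for i
    using ae[of i] by eventually_elim (use hB in auto)
qed


theorem lemma8p4:
  fixes \<Omega> :: "(real^'d) set" and \<Omega>1 :: "(real^'d) set"
    and U :: "real^'d \<Rightarrow> real^'d^'m \<Rightarrow> real"
    and L :: "real^'d \<Rightarrow> ((real^'d^'m) \<Rightarrow>\<^sub>L (real^'d^'m))"
    and v :: "nat \<Rightarrow> real^'d \<Rightarrow> real^'m" and Dv :: "nat \<Rightarrow> real^'d \<Rightarrow> real^'d^'m"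
    and \<alpha> :: "nat \<Rightarrow> real" and R :: real
    and \<pi> :: "(real^'d) measure" and \<mu> \<nu> :: "real^'d \<Rightarrow> (real^'d^'m) measure"
    and x0 :: "real^'d" and r :: real and \<theta> :: "nat \<Rightarrow> real^'d \<Rightarrow> real"
  assumes dom: "open \<Omega>" "connected \<Omega>" "bounded \<Omega>" "C1_boundary \<Omega>"
    and bdry1: "\<Omega>1 \<subseteq> frontier \<Omega>" "openin (top_of_set (frontier \<Omega>)) \<Omega>1"
    and U_cont: "continuous_on (closure \<Omega> \<times> UNIV) (\<lambda>(x, G). U x G)"
    and U_zero: "\<forall>x\<in>closure \<Omega>. U x 0 = 0"
    and L_cont: "continuous_on (closure \<Omega>) L"
    and weak: "W12_weak_to_zero \<Omega> v Dv"
    and alpha_pos: "\<forall>n. \<alpha> n > 0"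
    and bound: "\<exists>C. \<forall>n. esssup (lebesgue_on \<Omega>) (\<lambda>x. ereal (norm (\<alpha> n *\<^sub>R v n x))) \<le> ereal C \<and>
                       esssup (lebesgue_on \<Omega>) (\<lambda>x. ereal (norm (\<alpha> n *\<^sub>R Dv n x))) \<le> ereal C"
    and R_def: "ereal R = (SUP n. esssup (lebesgue_on \<Omega>) (\<lambda>x. ereal (norm (\<alpha> n *\<^sub>R Dv n x))))"
    and repr: "repr_measures \<Omega> \<alpha> Dv R \<pi> \<mu> \<nu>"
    and x0: "x0 \<in> \<Omega> \<union> closure \<Omega>1" and r: "r > 0"
    and theta_test: "\<forall>k. \<theta> k \<in> Cc_inf (ball x0 r)"
    and theta_bdd: "\<exists>M. \<forall>k x. \<bar>\<theta> k x\<bar> \<le> M"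
    and theta_lim: "\<forall>x\<in>closure \<Omega>. (\<lambda>k. \<theta> k x) \<longlonglongrightarrow> indicator (ball x0 r \<inter> closure \<Omega>) x"
  shows "\<exists>lim_in::nat \<Rightarrow> real.
     (\<forall>k. (\<lambda>n. LINT x:(ball x0 r \<inter> closure \<Omega>)|lebesgue. Fdens U L x0 (\<alpha> n) (\<theta> k x *\<^sub>R Dv n x))
            \<longlonglongrightarrow> lim_in k) \<and>
     lim_in \<longlonglongrightarrow> (LINT x:(ball x0 r \<inter> closure \<Omega>)|\<pi>.
                 (\<integral>F. U x0 F \<partial>\<mu> x) + 1/2 * (LINT F:sphere 0 1|\<nu> x. L x0 F \<bullet> F))"
proof -
  have sub1: "closure \<Omega>1 \<subseteq> closure \<Omega>"
  proof -
    have "closure \<Omega>1 \<subseteq> closure (frontier \<Omega>)" using bdry1(1) by (rule closure_mono)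
    also have "\<dots> = frontier \<Omega>" by (simp add: closure_closed frontier_closed)
    also have "\<dots> \<subseteq> closure \<Omega>" by (simp add: frontier_def)
    finally show ?thesis .
  qed
  have x0c: "x0 \<in> closure \<Omega>" using x0 sub1 closure_subset by blast
  obtain M where M: "\<And>k x. \<bar>\<theta> k x\<bar> \<le> M" using theta_bdd by blast
  have M0: "0 \<le> M" using M[of 0 x0] abs_ge_zero order_trans by blast
  have thc: "continuous_on UNIV (\<theta> k)" for k
  proof -
    have "smooth (\<theta> k)" using theta_test by (simp add: Cc_inf_def)
    then have "pdiff [] (\<theta> k) differentiable (at x)" for x unfolding smooth_def by blast
    then have "\<theta> k differentiable (at x)" for x by simp
    then show ?thesis by (simp add: continuous_at_imp_continuous_on differentiable_imp_continuous_within)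
  qed
  have th0: "\<theta> k x = 0" if "x \<notin> ball x0 r" for k x
  proof (rule ccontr)
    assume "\<theta> k x \<noteq> 0"
    then have "x \<in> tsupport (\<theta> k)" unfolding tsupport_def by (intro subsetD[OF closure_subset]) simp
    moreover have "tsupport (\<theta> k) \<subseteq> ball x0 r" using theta_test by (simp add: Cc_inf_def)
    ultimately show False using that by blast
  qed
  have Uc0: "continuous_on UNIV (U x0)"
  proof -
    have "continuous_on UNIV (\<lambda>G. (\<lambda>(x,G). U x G) (x0, G))"
      by (rule continuous_on_compose2[OF U_cont]) (use x0c in \<open>auto intro!: continuous_intros\<close>)
    then show ?thesis by simp
  qed
  define Uk where "Uk k = (\<lambda>x G. (\<theta> k x)\<^sup>2 * U x0 (\<theta> k x *\<^sub>R G))" for k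
  define Lk where "Lk k = (\<lambda>x. (\<theta> k x)\<^sup>2 *\<^sub>R L x0)" for k
  define Ik where "Ik k x = Iint (Uk k) (Lk k) x (\<mu> x) (\<nu> x)" for k x
  define A where "A = ball x0 r \<inter> closure \<Omega>"
  define P where "P x s = (\<integral>F. U x0 (s *\<^sub>R F) \<partial>\<mu> x)" for x s
  define J where "J x = (LINT F:sphere 0 1|\<nu> x. L x0 F \<bullet> F)" for x
  define Itil where "Itil x = (\<integral>F. U x0 F \<partial>\<mu> x) + 1/2 * J x" for x
  note Rp = repr[unfolded repr_measures_def]
  note pi_sets = Rp[THEN conjunct1]
  note pi_fin = Rp[THEN conjunct2, THEN conjunct1]
  note pi_null = Rp[THEN conjunct2, THEN conjunct2, THEN conjunct1]
  note mxall = Rp[THEN conjunct2, THEN conjunct2, THEN conjunct2, THEN conjunct1]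
  note conv = Rp[THEN conjunct2, THEN conjunct2, THEN conjunct2, THEN conjunct2]
  have mx: "prob_space (\<mu> x) \<and> sets (\<mu> x) = sets borel \<and> emeasure (\<mu> x) (- cball 0 R) = 0 \<and>
        prob_space (\<nu> x) \<and> sets (\<nu> x) = sets borel \<and> emeasure (\<nu> x) (- sphere 0 1) = 0"
    if "x \<in> closure \<Omega>" for x using mxall that by (rule bspec)
  have Ukc: "continuous_on (closure \<Omega> \<times> UNIV) (\<lambda>(x, G). Uk k x G)" for k
  proof -
    have thc2: "continuous_on UNIV (\<lambda>p::(real^'d) \<times> (real^'d^'m). \<theta> k (fst p))"
      by (rule continuous_on_compose2[OF thc]) (auto intro: continuous_intros)
    have uc2: "continuous_on UNIV (\<lambda>p::(real^'d) \<times> (real^'d^'m). U x0 (\<theta> k (fst p) *\<^sub>R snd p))"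
      by (rule continuous_on_compose2[OF Uc0]) (auto intro!: continuous_intros thc2)
    have "continuous_on UNIV (\<lambda>p::(real^'d) \<times> (real^'d^'m). (\<theta> k (fst p))\<^sup>2 * U x0 (\<theta> k (fst p) *\<^sub>R snd p))"
      by (intro continuous_intros thc2 uc2)
    then show ?thesis unfolding Uk_def case_prod_unfold by (rule continuous_on_subset) simp
  qed
  have Lkc: "continuous_on (closure \<Omega>) (Lk k)" for k
    unfolding Lk_def using continuous_on_subset[OF thc subset_UNIV] by (auto intro!: continuous_intros)
  have Uk0: "\<forall>x\<in>closure \<Omega>. Uk k x 0 = 0" for k
    unfolding Uk_def using U_zero x0c by simp
  have ck: "integrable \<pi> (Ik k) \<and> (\<forall>\<phi>. continuous_on (closure \<Omega>) \<phi> \<longrightarrow>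
           (\<lambda>n. (LINT x:\<Omega>|lebesgue. \<phi> x * Fdens (Uk k) (Lk k) x (\<alpha> n) (Dv n x)))
             \<longlonglongrightarrow> (\<integral>x. \<phi> x * Ik k x \<partial>\<pi>))" for k
    using conv[rule_format, OF conjI[OF Ukc conjI[OF Uk0 Lkc]]] unfolding Ik_def by blast
  have neg: "frontier \<Omega> \<in> null_sets lebesgue"
    using frontier_negligible[OF dom(1) dom(4)] negligible_iff_null_sets by blast
  have eqint: "(LINT x:\<Omega>|lebesgue. 1 * Fdens (Uk k) (Lk k) x (\<alpha> n) (Dv n x))
      = (LINT x:A|lebesgue. Fdens U L x0 (\<alpha> n) (\<theta> k x *\<^sub>R Dv n x))" for k n
  proof -
    have "AE x in lebesgue. indicator \<Omega> x *\<^sub>R (1 * Fdens (Uk k) (Lk k) x (\<alpha> n) (Dv n x))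
        = indicator A x *\<^sub>R Fdens U L x0 (\<alpha> n) (\<theta> k x *\<^sub>R Dv n x)"
      using AE_not_in[OF neg]
    proof eventually_elim
      case (elim x)
      have FF: "Fdens (Uk k) (Lk k) x (\<alpha> n) (Dv n x) = Fdens U L x0 (\<alpha> n) (\<theta> k x *\<^sub>R Dv n x)"
        unfolding Uk_def Lk_def by (rule Fdens_scale)
      show ?case
      proof (cases "x \<in> \<Omega>")
        case True
        then have xc: "x \<in> closure \<Omega>" using closure_subset by blast
        show ?thesis
        proof (cases "x \<in> ball x0 r")
          case True then show ?thesis using \<open>x \<in> \<Omega>\<close> xc FF by (simp add: A_def)
        next
          case False then show ?thesis using \<open>x \<in> \<Omega>\<close> FF th0[OF False] by (simp add: A_def Fdens_zero)
        qed
      next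
        case False
        then have "x \<notin> closure \<Omega>" using elim dom(1) by (simp add: frontier_def interior_open)
        then show ?thesis using False by (simp add: A_def)
      qed
    qed
    then show ?thesis unfolding set_lebesgue_integral_def by (rule integral_AE_lebesgue)
  qed
  have conv_n: "(\<lambda>n. LINT x:A|lebesgue. Fdens U L x0 (\<alpha> n) (\<theta> k x *\<^sub>R Dv n x))
      \<longlonglongrightarrow> integral\<^sup>L \<pi> (Ik k)" for k
  proof -
    have "(\<lambda>n. (LINT x:\<Omega>|lebesgue. 1 * Fdens (Uk k) (Lk k) x (\<alpha> n) (Dv n x)))
             \<longlonglongrightarrow> (\<integral>x. 1 * Ik k x \<partial>\<pi>)"
      using ck[of k] continuous_on_const by blast
    then show ?thesis unfolding eqint by simp
  qed
  have Asub: "A \<subseteq> closure \<Omega>" unfolding A_def by blast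
  have sets_cl: "closure \<Omega> \<in> sets \<pi>" using pi_sets by simp
  have AE_cl: "AE x in \<pi>. x \<in> closure \<Omega>"
  proof -
    have "- closure \<Omega> \<in> sets \<pi>" using pi_sets by simp
    then have "- closure \<Omega> \<in> null_sets \<pi>" using pi_null by (simp add: null_sets_def)
    from AE_not_in[OF this] show ?thesis by simp
  qed
  obtain B where B0: "0 \<le> B" and hB: "\<forall>G\<in>cball 0 (M * \<bar>R\<bar>). \<bar>U x0 G\<bar> \<le> B"
  proof -
    have "compact (U x0 ` cball 0 (M * \<bar>R\<bar>))"
      by (intro compact_continuous_image continuous_on_subset[OF Uc0]) auto
    then obtain b where b: "\<forall>y \<in> U x0 ` cball 0 (M * \<bar>R\<bar>). norm y \<le> b"
      using compact_imp_bounded bounded_iff by metis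
    have "\<forall>G\<in>cball 0 (M * \<bar>R\<bar>). \<bar>U x0 G\<bar> \<le> max b 0"
    proof
      fix G :: "real^'d^'m" assume "G \<in> cball 0 (M * \<bar>R\<bar>)"
      then have "norm (U x0 G) \<le> b" using b by blast
      then show "\<bar>U x0 G\<bar> \<le> max b 0" by simp
    qed
    then show thesis using that[of "max b 0"] by simp
  qed
  have aeR: "AE F in \<mu> x. norm (s *\<^sub>R F) \<le> M * \<bar>R\<bar>" if "x \<in> closure \<Omega>" "\<bar>s\<bar> \<le> M" for x s
  proof -
    have "- cball 0 R \<in> sets (\<mu> x)" using mx[OF that(1)] by simp
    then have "- cball 0 R \<in> null_sets (\<mu> x)" using mx[OF that(1)] by (simp add: null_sets_def)
    from AE_not_in[OF this] show ?thesis
    proof eventually_elim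
      case (elim F)
      then have "norm F \<le> \<bar>R\<bar>" by simp
      then have "\<bar>s\<bar> * norm F \<le> M * \<bar>R\<bar>" using that(2) by (intro mult_mono) auto
      then show ?case by simp
    qed
  qed
  have Pbd: "\<bar>P x s\<bar> \<le> B" if "x \<in> closure \<Omega>" "\<bar>s\<bar> \<le> M" for x s
    unfolding P_def
  proof (rule prob_abs_bound)
    show "prob_space (\<mu> x)" using mx[OF that(1)] by blast
    show "0 \<le> B" by (rule B0)
    show "AE F in \<mu> x. \<bar>U x0 (s *\<^sub>R F)\<bar> \<le> B"
      using aeR[OF that] by eventually_elim (use hB in auto)
  qed
  have Jbd: "\<bar>J x\<bar> \<le> norm (L x0)" if "x \<in> closure \<Omega>" for x
    unfolding J_def set_lebesgue_integral_def
  proof (rule prob_abs_bound)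
    show "prob_space (\<nu> x)" using mx[OF that(1)] by blast
    show "0 \<le> norm (L x0)" by simp
    show "AE F in \<nu> x. \<bar>indicator (sphere 0 1) F *\<^sub>R (L x0 F \<bullet> F)\<bar> \<le> norm (L x0)"
    proof (intro AE_I2)
      fix F :: "real^'d^'m"
      show "\<bar>indicator (sphere 0 1) F *\<^sub>R (L x0 F \<bullet> F)\<bar> \<le> norm (L x0)"
      proof (cases "F \<in> sphere 0 1")
        case True
        then have nF: "norm F = 1" by simp
        have "\<bar>L x0 F \<bullet> F\<bar> \<le> norm (L x0 F) * norm F" by (rule Cauchy_Schwarz_ineq2)
        also have "\<dots> \<le> norm (L x0) * norm F * norm F"
          by (intro mult_right_mono norm_blinfun) simp
        finally show ?thesis using True nF by simp
      qed simp
    qed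
  qed
  have Ik_eq: "Ik k x = (\<theta> k x)\<^sup>2 * P x (\<theta> k x) + 1/2 * ((\<theta> k x)\<^sup>2 * J x)" for k x
  proof -
    have e1: "(\<integral>F. Uk k x F \<partial>\<mu> x) = (\<theta> k x)\<^sup>2 * P x (\<theta> k x)"
      unfolding Uk_def P_def by (rule integral_mult_right_zero)
    have "(\<lambda>F. indicator (sphere 0 1) F *\<^sub>R (Lk k x F \<bullet> F))
        = (\<lambda>F. (\<theta> k x)\<^sup>2 * (indicator (sphere 0 1) F *\<^sub>R (L x0 F \<bullet> F)))"
      unfolding Lk_def by (simp add: fun_eq_iff scaleR_blinfun.rep_eq)
    then have e2: "(LINT F:sphere 0 1|\<nu> x. Lk k x F \<bullet> F) = (\<theta> k x)\<^sup>2 * J x"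
      unfolding J_def set_lebesgue_integral_def by simp
    show ?thesis unfolding Ik_def Iint_def e1 e2 ..
  qed
  define C where "C = M\<^sup>2 * B + 1/2 * (M\<^sup>2 * norm (L x0))"
  have C0: "0 \<le> C" unfolding C_def using B0 by simp
  have Ikbd: "\<bar>Ik k x\<bar> \<le> C" if "x \<in> closure \<Omega>" for k x
  proof -
    have t2: "(\<theta> k x)\<^sup>2 \<le> M\<^sup>2" using M[of k x] M0 by (simp add: abs_le_square_iff[symmetric])
    have "\<bar>(\<theta> k x)\<^sup>2 * P x (\<theta> k x)\<bar> \<le> M\<^sup>2 * B"
      unfolding abs_mult using t2 Pbd[OF that M] by (intro mult_mono) auto
    moreover have "\<bar>(\<theta> k x)\<^sup>2 * J x\<bar> \<le> M\<^sup>2 * norm (L x0)"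
      unfolding abs_mult using t2 Jbd[OF that] by (intro mult_mono) auto
    ultimately show ?thesis unfolding Ik_eq C_def by linarith
  qed
  have Iklim: "(\<lambda>k. Ik k x) \<longlonglongrightarrow> indicator A x * Itil x" if xc: "x \<in> closure \<Omega>" for x
  proof -
    define c where "c = (indicator A x :: real)"
    have tl: "(\<lambda>k. \<theta> k x) \<longlonglongrightarrow> c" using theta_lim xc unfolding c_def A_def by blast
    have c01: "c = 0 \<or> c = 1" unfolding c_def by (simp add: indicator_def)
    have cM: "\<bar>c\<bar> \<le> M"
    proof -
      have "(\<lambda>k. \<bar>\<theta> k x\<bar>) \<longlonglongrightarrow> \<bar>c\<bar>" by (intro tendsto_intros tl)
      then show ?thesis using M by (intro LIMSEQ_le_const2) auto
    qed
    have Pl: "(\<lambda>k. P x (\<theta> k x)) \<longlonglongrightarrow> P x c"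
      unfolding P_def
    proof (rule dconv_lemma[where K="M * \<bar>R\<bar>" and B=B])
      show "prob_space (\<mu> x)" "sets (\<mu> x) = sets borel" using mx[OF xc] by blast+
      show "\<And>k. AE F in \<mu> x. norm (\<theta> k x *\<^sub>R F) \<le> M * \<bar>R\<bar>" using aeR[OF xc M] .
      show "AE F in \<mu> x. norm (c *\<^sub>R F) \<le> M * \<bar>R\<bar>" using aeR[OF xc cM] .
    qed (use Uc0 hB tl in auto)
    have "(\<lambda>k. Ik k x) \<longlonglongrightarrow> c\<^sup>2 * P x c + 1/2 * (c\<^sup>2 * J x)"
      unfolding Ik_eq by (intro tendsto_intros tl Pl)
    moreover have "c\<^sup>2 * P x c + 1/2 * (c\<^sup>2 * J x) = c * Itil x"
      using c01 unfolding Itil_def P_def by (auto simp: U_zero x0c)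
    ultimately show ?thesis unfolding c_def by simp
  qed
  define s where "s k x = indicator (closure \<Omega>) x * Ik k x" for k x
  define f where "f x = indicator A x * Itil x" for x
  have s_meas: "s k \<in> borel_measurable \<pi>" for k
    unfolding s_def
    by (intro borel_measurable_times borel_measurable_indicator sets_cl
        borel_measurable_integrable[OF ck[THEN conjunct1]])
  have s_lim: "(\<lambda>k. s k x) \<longlonglongrightarrow> f x" for x
  proof (cases "x \<in> closure \<Omega>")
    case True then show ?thesis unfolding s_def f_def using Iklim[OF True] by simp
  next
    case False then have "x \<notin> A" using Asub by blast
    then show ?thesis using False unfolding s_def f_def by simp
  qed
  have f_meas: "f \<in> borel_measurable \<pi>"
    by (rule borel_measurable_LIMSEQ_real[OF s_lim s_meas])
  have conv_k: "(\<lambda>k. integral\<^sup>L \<pi> (s k)) \<longlonglongrightarrow> integral\<^sup>L \<pi> f"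
  proof (rule integral_dominated_convergence[where w="\<lambda>_. C"])
    show "f \<in> borel_measurable \<pi>" by (rule f_meas)
    show "\<And>k. s k \<in> borel_measurable \<pi>" by (rule s_meas)
    show "integrable \<pi> (\<lambda>_. C)" using pi_fin by (rule finite_measure.integrable_const)
    show "AE x in \<pi>. (\<lambda>k. s k x) \<longlonglongrightarrow> f x" using s_lim by simp
    show "AE x in \<pi>. norm (s k x) \<le> C" for k
    proof (intro AE_I2)
      fix x show "norm (s k x) \<le> C"
        using Ikbd[of x k] C0 unfolding s_def by (cases "x \<in> closure \<Omega>") auto
    qed
  qed
  have sI: "integral\<^sup>L \<pi> (s k) = integral\<^sup>L \<pi> (Ik k)" for k
  proof (rule integral_cong_AE)
    show "s k \<in> borel_measurable \<pi>" by (rule s_meas)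
    show "Ik k \<in> borel_measurable \<pi>" by (rule borel_measurable_integrable[OF ck[THEN conjunct1]])
    show "AE x in \<pi>. s k x = Ik k x" using AE_cl by eventually_elim (simp add: s_def)
  qed
  have fI: "integral\<^sup>L \<pi> f = (LINT x:A|\<pi>. (\<integral>F. U x0 F \<partial>\<mu> x) + 1/2 * (LINT F:sphere 0 1|\<nu> x. L x0 F \<bullet> F))"
    unfolding f_def set_lebesgue_integral_def Itil_def J_def by simp
  show ?thesis
  proof (intro exI conjI allI)
    show "(\<lambda>n. LINT x:(ball x0 r \<inter> closure \<Omega>)|lebesgue. Fdens U L x0 (\<alpha> n) (\<theta> k x *\<^sub>R Dv n x))
            \<longlonglongrightarrow> integral\<^sup>L \<pi> (Ik k)" for k
      using conv_n[of k] unfolding A_def .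
    show "(\<lambda>k. integral\<^sup>L \<pi> (Ik k)) \<longlonglongrightarrow> (LINT x:(ball x0 r \<inter> closure \<Omega>)|\<pi>.
                 (\<integral>F. U x0 F \<partial>\<mu> x) + 1/2 * (LINT F:sphere 0 1|\<nu> x. L x0 F \<bullet> F))"
      using conv_k unfolding sI fI A_def .
  qed
qed

end
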